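(* Let $G\le\mathrm{O}(d)$ be finite, $x,y\in\mathbb{R}^d$, and $T\subseteq[y]$. Consider the statements: (a) $T\supseteq S(x,y)$; (b) $\bigcup_{p\in T}\overline{V_p}\supseteq\overline{V_x}$; (c) for every $z\in\mathbb{R}^d$ there exists $v\in\arg\max_{p\in[z]}\langle p,x\rangle$ such that $T\cap\arg\max_{q\in[y]}\langle q,v\rangle\ne\varnothing$. Then (a)$\Leftrightarrow$(b)$\Rightarrow$(c), and if moreover $x\in P(G)$, then (c)$\Rightarrow$(b).
   Context: For $x\in\mathbb{R}^d$, $[x]:=\{gx:g\in G\}$. The open Voronoi cell $V_x$ is the set of $y\in\mathbb{R}^d$ such that $x$ is the unique maximizer of $\langle p,y\rangle$ over $p\in[x]$, and $\overline{V_x}$ is its closure. $S(x,y):=\{q\in[y]:V_q\cap V_x\ne\varnothing\}$. $P(G):=\{x\in\mathbb{R}^d:\mathrm{stab}_G(x)=\{\mathrm{id}\}\}$. *)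

theory Defs
  imports "HOL-Analysis.Analysis"
begin

definition finite_orth_group :: "(real^'n::finite^'n) set \<Rightarrow> bool" where
  "finite_orth_group G \<longleftrightarrow> finite G \<and> mat 1 \<in> G \<and> (\<forall>g\<in>G. orthogonal_matrix g)
     \<and> (\<forall>g\<in>G. \<forall>h\<in>G. g ** h \<in> G) \<and> (\<forall>g\<in>G. matrix_inv g \<in> G)"

definition orbit :: "(real^'n^'n) set \<Rightarrow> real^'n \<Rightarrow> (real^'n) set" where
  "orbit G x = (\<lambda>g. g *v x) ` G"

definition vcell :: "(real^'n^'n) set \<Rightarrow> real^'n \<Rightarrow> (real^'n) set" where
  "vcell G x = {y. \<forall>p\<in>orbit G x. p \<noteq> x \<longrightarrow> inner p y < inner x y}"

definition Sset :: "(real^'n^'n) set \<Rightarrow> real^'n \<Rightarrow> real^'n \<Rightarrow> (real^'n) set" where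
  "Sset G x y = {q\<in>orbit G y. vcell G q \<inter> vcell G x \<noteq> {}}"

definition principal :: "(real^'n^'n) set \<Rightarrow> (real^'n) set" where
  "principal G = {x. \<forall>g\<in>G. g *v x = x \<longrightarrow> g = mat 1}"

definition argmax_inner :: "(real^'n) set \<Rightarrow> real^'n \<Rightarrow> (real^'n) set" where
  "argmax_inner A w = {p\<in>A. \<forall>p'\<in>A. inner p' w \<le> inner p w}"

end

theory Submission imports Defs begin

lemma orth_inv: assumes "orthogonal_matrix (g::real^'n^'n)" shows "matrix_inv g = transpose g"
proof -
  have ex: "\<exists>A'. g ** A' = mat 1 \<and> A' ** g = mat 1" using assms unfolding orthogonal_matrix_def by blast
  then have s: "g ** matrix_inv g = mat 1 \<and> matrix_inv g ** g = mat 1"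
    unfolding matrix_inv_def by (rule someI_ex)
  have "matrix_inv g = matrix_inv g ** (g ** transpose g)" using assms by (simp add: orthogonal_matrix_def)
  also have "\<dots> = (matrix_inv g ** g) ** transpose g" by (simp add: matrix_mul_assoc)
  also have "\<dots> = transpose g" using s by simp
  finally show ?thesis .
qed

lemma inner_mv: "inner ((g::real^'n^'n) *v a) b = inner a (transpose g *v b)"
  by (metis dot_lmul_matrix inner_commute transpose_matrix_vector)

lemma norm_orth: assumes "orthogonal_matrix (g::real^'n^'n)" shows "norm (g *v a) = norm a"
proof -
  have "inner (g *v a) (g *v a) = inner a a"
    using assms by (simp add: inner_mv matrix_vector_mul_assoc orthogonal_matrix_def)
  then show ?thesis by (simp add: norm_eq_sqrt_inner)
qed

lemma strict_cs: fixes p v :: "'a::real_inner" assumes "norm p = norm v" "p \<noteq> v"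
  shows "inner p v < inner v v"
proof -
  have "0 < inner (p - v) (p - v)" using assms by simp
  also have "inner (p - v) (p - v) = inner p p + inner v v - 2 * inner p v"
    by (simp add: inner_diff_left inner_diff_right inner_commute)
  also have "inner p p = inner v v" using assms(1) by (metis norm_eq_sqrt_inner real_sqrt_eq_iff)
  finally show ?thesis by simp
qed

lemma ex_max: "finite A \<Longrightarrow> A \<noteq> {} \<Longrightarrow> \<exists>a\<in>A. \<forall>b\<in>A. (f b::real) \<le> f a"
proof (induction A rule: finite_induct)
  case empty then show ?case by simp
next
  case (insert x F)
  show ?case
  proof (cases "F = {}")
    case True then show ?thesis by simp
  next
    case False
    then obtain a where "a \<in> F" "\<forall>b\<in>F. f b \<le> f a" using insert by blast
    then show ?thesis by (cases "f a \<le> f x") force+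
  qed
qed

lemma lexpos:
  fixes a b c :: real
  assumes "a \<ge> 0" "a = 0 \<Longrightarrow> b \<ge> 0" "a = 0 \<Longrightarrow> b = 0 \<Longrightarrow> c > 0"
  shows "eventually (\<lambda>t. 0 < a + t * b + t^2 * c) (at_right 0)"
proof -
  have pos: "eventually (\<lambda>t. 0 < t) (at_right (0::real))"
    by (rule eventually_at_right_less)
  show ?thesis
  proof (cases "a > 0")
    case True
    have "((\<lambda>t. a + t * b + t^2 * c) \<longlongrightarrow> a + 0 * b + 0^2 * c) (at_right 0)"
      by (intro tendsto_intros)
    then have "((\<lambda>t. a + t * b + t^2 * c) \<longlongrightarrow> a) (at_right 0)" by simp
    then show ?thesis using True order_tendstoD(1) by blast
  next
    case False
    then have a0: "a = 0" using assms(1) by simp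
    show ?thesis
    proof (cases "b > 0")
      case True
      have "((\<lambda>t. b + t * c) \<longlongrightarrow> b + 0 * c) (at_right 0)" by (intro tendsto_intros)
      then have "eventually (\<lambda>t. 0 < b + t * c) (at_right 0)" using True order_tendstoD(1) by simp
      then show ?thesis using pos
        by eventually_elim (simp add: a0 power2_eq_square algebra_simps, metis distrib_left mult_pos_pos)
    next
      case False
      then have b0: "b = 0" and c0: "c > 0" using assms a0 by auto
      show ?thesis using pos by eventually_elim (simp add: a0 b0 c0)
    qed
  qed
qed


lemma fog_transpose: assumes "finite_orth_group G" "g \<in> G" shows "transpose g \<in> G"
  using assms orth_inv unfolding finite_orth_group_def by metis

lemma fog_orth: assumes "finite_orth_group G" "g \<in> G" shows "orthogonal_matrix g"
  using assms unfolding finite_orth_group_def by blast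

lemma orbit_finite: assumes "finite_orth_group G" shows "finite (orbit G v)"
  using assms unfolding finite_orth_group_def orbit_def by simp

lemma orbit_self: assumes "finite_orth_group G" shows "v \<in> orbit G v"
  using assms unfolding finite_orth_group_def orbit_def
  by (metis image_eqI matrix_vector_mul_lid)

lemma orbit_norm: assumes "finite_orth_group G" "p \<in> orbit G v" shows "norm p = norm v"
  using assms fog_orth norm_orth unfolding orbit_def by blast

lemma orbit_mem: assumes "finite_orth_group G" "g \<in> G" "p \<in> orbit G v" shows "g *v p \<in> orbit G v"
proof -
  obtain h where "h \<in> G" "p = h *v v" using assms unfolding orbit_def by blast
  then have "g *v p = (g ** h) *v v" by (simp add: matrix_vector_mul_assoc)
  moreover have "g ** h \<in> G" using assms \<open>h \<in> G\<close> unfolding finite_orth_group_def by blast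
  ultimately show ?thesis unfolding orbit_def by blast
qed

lemma orbit_eq: assumes "finite_orth_group G" "q \<in> orbit G y" shows "orbit G q = orbit G y"
proof
  obtain h where h: "h \<in> G" "q = h *v y" using assms unfolding orbit_def by blast
  show "orbit G q \<subseteq> orbit G y"
    using assms orbit_mem unfolding orbit_def by blast
  have "y = transpose h *v q" using h fog_orth[OF assms(1) h(1)]
    by (simp add: matrix_vector_mul_assoc orthogonal_matrix_def)
  moreover have "transpose h \<in> G" using fog_transpose assms h by blast
  ultimately have "y \<in> orbit G q" using orbit_self[OF assms(1)] orbit_mem[OF assms(1)] by metis
  then show "orbit G y \<subseteq> orbit G q"
    using assms orbit_mem unfolding orbit_def by blast
qed

lemma closure_vcell: assumes "finite_orth_group G"
  shows "closure (vcell G v) = {w. \<forall>p\<in>orbit G v. inner p w \<le> inner v w}"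
proof
  have cl: "closed {w. \<forall>p\<in>orbit G v. inner p w \<le> inner v w}"
  proof -
    have "{w. \<forall>p\<in>orbit G v. inner p w \<le> inner v w} = (\<Inter>p\<in>orbit G v. {w. inner p w \<le> inner v w})"
      by blast
    moreover have "closed {w. inner p w \<le> inner v w}" for p :: "real^'a"
      by (intro closed_Collect_le continuous_intros)
    ultimately show ?thesis by auto
  qed
  have "vcell G v \<subseteq> {w. \<forall>p\<in>orbit G v. inner p w \<le> inner v w}"
    unfolding vcell_def by (auto simp: less_imp_le)
  then show "closure (vcell G v) \<subseteq> {w. \<forall>p\<in>orbit G v. inner p w \<le> inner v w}"
    using cl closure_minimal by blast
next
  show "{w. \<forall>p\<in>orbit G v. inner p w \<le> inner v w} \<subseteq> closure (vcell G v)"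
  proof
    fix w assume w: "w \<in> {w. \<forall>p\<in>orbit G v. inner p w \<le> inner v w}"
    have "\<exists>u\<in>vcell G v. dist u w < e" if e: "e > 0" for e
    proof -
      define t where "t = e / (2 * (norm v + 1))"
      have t: "t > 0" using e unfolding t_def by (intro divide_pos_pos) (auto intro: add_nonneg_pos)
      have "t * norm v < e"
      proof -
        have "t * norm v \<le> t * (norm v + 1)" using t by simp
        also have "\<dots> = e / 2"
        proof -
          have "norm v + 1 \<noteq> 0" using norm_ge_zero[of v] by linarith
          then show ?thesis unfolding t_def by (simp add: field_simps)
        qed
        finally show ?thesis using e by simp
      qed
      moreover have "w + t *\<^sub>R v \<in> vcell G v"
        unfolding vcell_def
      proof (intro CollectI ballI impI)
        fix p assume p: "p \<in> orbit G v" "p \<noteq> v"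
        have "inner p v < inner v v" using strict_cs orbit_norm[OF assms p(1)] p(2) by blast
        then have "t * inner p v < t * inner v v" using t by simp
        moreover have "inner p w \<le> inner v w" using w p by blast
        ultimately show "inner p (w + t *\<^sub>R v) < inner v (w + t *\<^sub>R v)"
          by (simp add: inner_add_right)
      qed
      moreover have "dist (w + t *\<^sub>R v) w = t * norm v" using t by (simp add: dist_norm)
      ultimately show ?thesis by metis
    qed
    then show "w \<in> closure (vcell G v)" by (simp add: closure_approachable)
  qed
qed


lemma lexpos_vec:
  fixes d w x q :: "real^'n"
  assumes "inner d w \<ge> 0" "inner d w = 0 \<Longrightarrow> inner d x \<ge> 0"
    "inner d w = 0 \<Longrightarrow> inner d x = 0 \<Longrightarrow> inner d q > 0"
  shows "eventually (\<lambda>t. 0 < inner d (w + t *\<^sub>R x + t^2 *\<^sub>R q)) (at_right 0)"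
proof -
  have eq: "inner d (w + t *\<^sub>R x + t^2 *\<^sub>R q) = inner d w + t * inner d x + t^2 * inner d q" for t
    by (simp only: inner_add_right inner_scaleR_right)
  show ?thesis unfolding eq by (rule lexpos[OF assms])
qed

theorem lemma24:
  fixes G :: "(real^'n^'n) set" and x y :: "real^'n" and T :: "(real^'n) set"
  assumes "finite_orth_group G" and "T \<subseteq> orbit G y"
  defines "a \<equiv> Sset G x y \<subseteq> T"
      and "b \<equiv> closure (vcell G x) \<subseteq> (\<Union>p\<in>T. closure (vcell G p))"
      and "c \<equiv> (\<forall>z. \<exists>v\<in>argmax_inner (orbit G z) x.
                   T \<inter> argmax_inner (orbit G y) v \<noteq> {})"
  shows "(a \<longleftrightarrow> b) \<and> (b \<longrightarrow> c) \<and> (x \<in> principal G \<longrightarrow> (c \<longrightarrow> b))"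
proof -
  note G = assms(1)
  have clT: "closure (vcell G p) = {w. \<forall>q\<in>orbit G y. inner q w \<le> inner p w}" if "p \<in> orbit G y" for p
    using closure_vcell[OF G, of p] orbit_eq[OF G that] by simp
  have clx: "closure (vcell G x) = {w. \<forall>p\<in>orbit G x. inner p w \<le> inner x w}"
    using closure_vcell[OF G] .
  have ab: "b" if ha: "a"
    unfolding b_def
  proof
    fix w assume "w \<in> closure (vcell G x)"
    then have w: "\<forall>p\<in>orbit G x. inner p w \<le> inner x w" using clx by simp
    define A1 where "A1 = {q\<in>orbit G y. \<forall>q'\<in>orbit G y. inner q' w \<le> inner q w}"
    have A1ne: "A1 \<noteq> {}" "finite A1"
      using ex_max[OF orbit_finite[OF G] , of y "\<lambda>q. inner q w"] orbit_self[OF G, of y]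
        orbit_finite[OF G, of y] unfolding A1_def by auto
    obtain q0 where q0: "q0 \<in> A1" "\<forall>q\<in>A1. inner q x \<le> inner q0 x"
      using ex_max[OF A1ne(2) A1ne(1), of "\<lambda>q. inner q x"] by blast
    have q0y: "q0 \<in> orbit G y" using q0 A1_def by simp
    define u where "u t = w + t *\<^sub>R x + t^2 *\<^sub>R q0" for t :: real
    have ev1: "eventually (\<lambda>t. \<forall>p\<in>orbit G x - {x}. 0 < inner (x - p) (u t)) (at_right 0)"
    proof (rule eventually_ball_finite)
      show "finite (orbit G x - {x})" using orbit_finite[OF G] by simp
      show "\<forall>p\<in>orbit G x - {x}. eventually (\<lambda>t. 0 < inner (x - p) (u t)) (at_right 0)"
      proof
        fix p assume p: "p \<in> orbit G x - {x}"
        have "inner p x < inner x x" using strict_cs orbit_norm[OF G] p by blast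
        then show "eventually (\<lambda>t. 0 < inner (x - p) (u t)) (at_right 0)"
          unfolding u_def using w p
          by (intro lexpos_vec) (auto simp: inner_diff_left)
      qed
    qed
    have ev2: "eventually (\<lambda>t. \<forall>q\<in>orbit G y - {q0}. 0 < inner (q0 - q) (u t)) (at_right 0)"
    proof (rule eventually_ball_finite)
      show "finite (orbit G y - {q0})" using orbit_finite[OF G] by simp
      show "\<forall>q\<in>orbit G y - {q0}. eventually (\<lambda>t. 0 < inner (q0 - q) (u t)) (at_right 0)"
      proof
        fix q assume q: "q \<in> orbit G y - {q0}"
        have nq: "norm q = norm q0" using orbit_norm[OF G] q q0y by simp
        have "inner q q0 < inner q0 q0" using strict_cs[OF nq] q by blast
        moreover have "inner q w \<le> inner q0 w" using q0 q unfolding A1_def by auto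
        moreover have "inner q x \<le> inner q0 x" if "inner q w = inner q0 w"
        proof -
          have "q \<in> A1" using q0 q that unfolding A1_def by auto
          then show ?thesis using q0 by blast
        qed
        ultimately show "eventually (\<lambda>t. 0 < inner (q0 - q) (u t)) (at_right 0)"
          unfolding u_def by (intro lexpos_vec) (auto simp: inner_diff_left)
      qed
    qed
    obtain t where t1: "\<forall>p\<in>orbit G x - {x}. 0 < inner (x - p) (u t)"
      and t2: "\<forall>q\<in>orbit G y - {q0}. 0 < inner (q0 - q) (u t)"
      using eventually_happens[OF eventually_conj[OF ev1 ev2]] trivial_limit_at_right_real by blast
    have "u t \<in> vcell G x" unfolding vcell_def using t1 by (auto simp: inner_diff_left)
    moreover have "u t \<in> vcell G q0" unfolding vcell_def using t2 orbit_eq[OF G q0y]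
      by (auto simp: inner_diff_left)
    ultimately have "q0 \<in> Sset G x y" unfolding Sset_def using q0y by blast
    then have "q0 \<in> T" using ha unfolding a_def by blast
    moreover have "w \<in> closure (vcell G q0)" using clT[OF q0y] q0 A1_def by auto
    ultimately show "w \<in> (\<Union>p\<in>T. closure (vcell G p))" by blast
  qed
  have ba: "a" if hb: "b"
    unfolding a_def
  proof
    fix q assume "q \<in> Sset G x y"
    then obtain u where q: "q \<in> orbit G y" "u \<in> vcell G q" "u \<in> vcell G x"
      unfolding Sset_def by blast
    then have "u \<in> closure (vcell G x)" using closure_subset by blast
    then obtain p where p: "p \<in> T" "u \<in> closure (vcell G p)" using hb unfolding b_def by blast
    have py: "p \<in> orbit G y" using p assms(2) by blast
    have "inner q u \<le> inner p u" using p(2) clT[OF py] q(1) by blast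
    moreover have "p \<noteq> q \<Longrightarrow> inner p u < inner q u"
      using q(2) py orbit_eq[OF G q(1)] unfolding vcell_def by blast
    ultimately have "p = q" by linarith
    then show "q \<in> T" using p by simp
  qed
  have bc: "c" if hb: "b"
    unfolding c_def
  proof
    fix z
    obtain v where v: "v \<in> orbit G z" "\<forall>v'\<in>orbit G z. inner v' x \<le> inner v x"
      using ex_max[OF orbit_finite[OF G], of z "\<lambda>v. inner v x"] orbit_self[OF G, of z] by blast
    have "v \<in> closure (vcell G x)" unfolding clx
    proof (intro CollectI ballI)
      fix p assume "p \<in> orbit G x"
      then obtain g where g: "g \<in> G" "p = g *v x" unfolding orbit_def by blast
      have "transpose g *v v \<in> orbit G z" using orbit_mem[OF G fog_transpose[OF G g(1)] v(1)] .
      then have "inner (transpose g *v v) x \<le> inner v x" using v by blast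
      moreover have "inner (transpose g *v v) x = inner p v"
        using g inner_mv[of "transpose g" v x] by (simp only: transpose_transpose inner_commute)
      ultimately show "inner p v \<le> inner x v" by (simp add: inner_commute)
    qed
    then obtain p where p: "p \<in> T" "v \<in> closure (vcell G p)" using hb unfolding b_def by blast
    have py: "p \<in> orbit G y" using p assms(2) by blast
    have "p \<in> T \<inter> argmax_inner (orbit G y) v"
      using p clT[OF py] py unfolding argmax_inner_def by auto
    moreover have "v \<in> argmax_inner (orbit G z) x" using v unfolding argmax_inner_def by auto
    ultimately show "\<exists>v\<in>argmax_inner (orbit G z) x. T \<inter> argmax_inner (orbit G y) v \<noteq> {}"
      by blast
  qed
  have cb: "b" if hc: "c" and xP: "x \<in> principal G"
    unfolding b_def
  proof (rule closure_minimal)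
    have "finite T" using assms(2) orbit_finite[OF G] finite_subset by blast
    then show "closed (\<Union>p\<in>T. closure (vcell G p))" by (intro closed_UN) auto
    show "vcell G x \<subseteq> (\<Union>p\<in>T. closure (vcell G p))"
    proof
      fix w assume w: "w \<in> vcell G x"
      obtain v where v: "v \<in> argmax_inner (orbit G w) x" "T \<inter> argmax_inner (orbit G y) v \<noteq> {}"
        using hc unfolding c_def by blast
      obtain h where h: "h \<in> G" "v = h *v w" using v unfolding argmax_inner_def orbit_def by blast
      have "v = w"
      proof (rule ccontr)
        assume vw: "v \<noteq> w"
        have "h \<noteq> mat 1" using vw h by auto
        define p where "p = transpose h *v x"
        have "p \<in> orbit G x" unfolding p_def orbit_def using fog_transpose[OF G h(1)] by blast
        moreover have "p \<noteq> x"
        proof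
          assume "p = x"
          then have "transpose h = mat 1" using xP fog_transpose[OF G h(1)]
            unfolding principal_def p_def by blast
          then have "h = mat 1" by (metis transpose_mat transpose_transpose)
          then show False using \<open>h \<noteq> mat 1\<close> by simp
        qed
        ultimately have "inner p w < inner x w" using w unfolding vcell_def by blast
        moreover have "inner p w = inner v x" unfolding p_def h(2)
          using inner_mv[of "transpose h" x w] by (simp only: transpose_transpose inner_commute)
        moreover have "inner w x \<le> inner v x"
          using v(1) orbit_self[OF G, of w] unfolding argmax_inner_def by blast
        ultimately show False by (simp add: inner_commute)
      qed
      then obtain p where p: "p \<in> T" "p \<in> argmax_inner (orbit G y) w" using v by blast
      have py: "p \<in> orbit G y" using p assms(2) by blast
      have "w \<in> closure (vcell G p)" using p(2) clT[OF py] unfolding argmax_inner_def by auto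
      then show "w \<in> (\<Union>p\<in>T. closure (vcell G p))" using p by blast
    qed
  qed
  show ?thesis using ab ba bc cb by blast
qed

end
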